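(* Let $\mathit{Lin}_n,\mathit{Lout}_n,\mathit{Ain}_n,\mathit{Aout}_n$ be the solution of the data flow equations for a procedure $p$ computed by iteration starting from $\emptyset$ for every variable. Let $n$ be a node, $x\in\mathbf{P}$ and $z\in\mathbf{V}\setminus\{?\}$. If, along some execution path from $\mathrm{Start}_p$ reaching node $n$ (executing the pointer assignment statements with their usual meaning, pointers being undefined, i.e. holding $?$, at $\mathrm{Start}_p$), $x$ holds the address of $z$ on entry to $n$, then $x\in\mathit{Ref}_n$ implies $(x,z)\in\mathit{Ain}_n$.
   Context: $\mathbf{V}$ is a finite set of variables, $\mathbf{P}\subseteq\mathbf{V}$ the set of pointer variables, and $\mathbf{V}\setminus\mathbf{P}$ contains a special element $?$ (undefined location). A procedure $p$ is a control flow graph whose nodes are statements, with unique entry node $\mathrm{Start}_p$ (no predecessors) and unique exit node $\mathrm{End}_p$ (no successors), every node reachable from $\mathrm{Start}_p$ and $\mathrm{End}_p$ reachable from every node; $\mathit{succ}(n)$, $\mathit{pred}(n)$ denote successors/predecessors. Every node is of one of the forms: "use $x$", "$x=\&a$", "$x=y$", "$x=*y$", "$*x=y$", or "other", where $x,y\in\mathbf{P}$, $a\in\mathbf{V}$. Relation notation for $R\subseteq\mathbf{P}\times\mathbf{V}$ and a set $X$: $R\,X=\{v\mid u\in X,\ (u,v)\in R\}$; $R|_X=\{(u,v)\in R\mid u\in X\}$; $R^2=\{(u,w)\mid (u,v)\in R,\ (v,w)\in R\}$. $\mathit{Must}(R)=\bigcup_{x\in\mathbf{P}}\{x\}\times M_x$,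 where $M_x=\mathbf{V}$ if $R|_{\{x\}}=\emptyset$ or $R|_{\{x\}}=\{(x,?)\}$; $M_x=\{y\}$ if $R|_{\{x\}}=\{(x,y)\}$ with $y\neq ?$; and $M_x=\emptyset$ otherwise. Extractor functions of node $n$ (with $A=\mathit{Ain}_n$): - use $x$: $\mathit{Def}_n=\emptyset$, $\mathit{Kill}_n=\emptyset$, $\mathit{Ref}_n=\{x\}$, $\mathit{Pointee}_n=\emptyset$. - $x=\&a$: $\mathit{Def}_n=\{x\}$, $\mathit{Kill}_n=\{x\}$, $\mathit{Ref}_n=\emptyset$, $\mathit{Pointee}_n=\{a\}$. - $x=y$: $\mathit{Def}_n=\{x\}$, $\mathit{Kill}_n=\{x\}$, $\mathit{Ref}_n=\{y\}$ if $\mathit{Def}_n\cap\mathit{Lout}_n\neq\emptyset$ and $\emptyset$ otherwise, $\mathit{Pointee}_n=A\{y\}$. - $x=*y$: $\mathit{Def}_n=\{x\}$, $\mathit{Kill}_n=\{x\}$, $\mathit{Ref}_n=\{y\}\cup((A\{y\})\cap\mathbf{P})$ if $\mathit{Def}_n\cap\mathit{Lout}_n\neq\emptyset$ and $\emptyset$ otherwise, $\mathit{Pointee}_n=A^2\{y\}$. - $*x=y$: $\mathit{Def}_n=(A\{x\})\cap\mathbf{P}$, $\mathit{Kill}_n=(\mathit{Must}(A)\{x\})\cap\mathbf{P}$, $\mathit{Ref}_n=\{x,y\}$ if $\mathit{Def}_n\cap\mathit{Lout}_n\neq\emptyset$ and $\{x\}$ otherwise, $\mathit{Pointee}_n=A\{y\}$.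 - other: all four are $\emptyset$. Data flow equations: $\mathit{Lout}_n=\emptyset$ if $n=\mathrm{End}_p$, else $\bigcup_{s\in\mathit{succ}(n)}\mathit{Lin}_s$; $\mathit{Lin}_n=(\mathit{Lout}_n-\mathit{Kill}_n)\cup\mathit{Ref}_n$; $\mathit{Ain}_n=\mathit{Lin}_n\times\{?\}$ if $n=\mathrm{Start}_p$, else $\big(\bigcup_{m\in\mathit{pred}(n)}\mathit{Aout}_m\big)|_{\mathit{Lin}_n}$; $\mathit{Aout}_n=\big((\mathit{Ain}_n-(\mathit{Kill}_n\times\mathbf{V}))\cup(\mathit{Def}_n\times\mathit{Pointee}_n)\big)|_{\mathit{Lout}_n}$. The solution is the greatest fixed point with respect to the data-flow order in which $\sqsubseteq$ is $\supseteq$ (top element $\emptyset$). *)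

theory Defs
  imports Main "HOL-Library.Product_Order"
begin

text \<open>Statements of the procedure. Variables range over the finite type 'v (the set V);
  P is the set of pointer variables and und is the special undefined location ?.\<close>

datatype 'v stmt =
    Use 'v
  | AddrOf 'v 'v      (* x = &a *)
  | Copy 'v 'v        (* x = y *)
  | Load 'v 'v        (* x = *y *)
  | Store 'v 'v       (* *x = y *)
  | Other

fun wf_stmt :: "'v set \<Rightarrow> 'v stmt \<Rightarrow> bool" where
  "wf_stmt P (Use x) = (x \<in> P)"
| "wf_stmt P (AddrOf x a) = (x \<in> P)"
| "wf_stmt P (Copy x y) = (x \<in> P \<and> y \<in> P)"
| "wf_stmt P (Load x y) = (x \<in> P \<and> y \<in> P)"
| "wf_stmt P (Store x y) = (x \<in> P \<and> y \<in> P)"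
| "wf_stmt P Other = True"

text \<open>Restriction R|_X. Image R X is the library's R `` X; R^2 is R O R.\<close>
definition restr :: "('a \<times> 'b) set \<Rightarrow> 'a set \<Rightarrow> ('a \<times> 'b) set" where
  "restr R X = {(u, v) \<in> R. u \<in> X}"

definition Mset :: "'v \<Rightarrow> ('v \<times> 'v) set \<Rightarrow> 'v \<Rightarrow> 'v set" where
  "Mset und R x =
     (if restr R {x} = {} \<or> restr R {x} = {(x, und)} then UNIV
      else if (\<exists>y. y \<noteq> und \<and> restr R {x} = {(x, y)}) then {THE y. restr R {x} = {(x, y)}}
      else {})"

definition Must :: "'v set \<Rightarrow> 'v \<Rightarrow> ('v \<times> 'v) set \<Rightarrow> ('v \<times> 'v) set" where
  "Must P und R = (\<Union>x\<in>P. {x} \<times> Mset und R x)"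

fun Def_of :: "'v set \<Rightarrow> 'v stmt \<Rightarrow> ('v \<times> 'v) set \<Rightarrow> 'v set" where
  "Def_of P (Use x) A = {}"
| "Def_of P (AddrOf x a) A = {x}"
| "Def_of P (Copy x y) A = {x}"
| "Def_of P (Load x y) A = {x}"
| "Def_of P (Store x y) A = (A `` {x}) \<inter> P"
| "Def_of P Other A = {}"

fun Kill_of :: "'v set \<Rightarrow> 'v \<Rightarrow> 'v stmt \<Rightarrow> ('v \<times> 'v) set \<Rightarrow> 'v set" where
  "Kill_of P und (Use x) A = {}"
| "Kill_of P und (AddrOf x a) A = {x}"
| "Kill_of P und (Copy x y) A = {x}"
| "Kill_of P und (Load x y) A = {x}"
| "Kill_of P und (Store x y) A = (Must P und A `` {x}) \<inter> P"
| "Kill_of P und Other A = {}"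

text \<open>Ref depends on A = Ain_n and Lo = Lout_n.\<close>
fun Ref_of :: "'v set \<Rightarrow> 'v stmt \<Rightarrow> ('v \<times> 'v) set \<Rightarrow> 'v set \<Rightarrow> 'v set" where
  "Ref_of P (Use x) A Lo = {x}"
| "Ref_of P (AddrOf x a) A Lo = {}"
| "Ref_of P (Copy x y) A Lo = (if Def_of P (Copy x y) A \<inter> Lo \<noteq> {} then {y} else {})"
| "Ref_of P (Load x y) A Lo =
     (if Def_of P (Load x y) A \<inter> Lo \<noteq> {} then {y} \<union> ((A `` {y}) \<inter> P) else {})"
| "Ref_of P (Store x y) A Lo = (if Def_of P (Store x y) A \<inter> Lo \<noteq> {} then {x, y} else {x})"
| "Ref_of P Other A Lo = {}"

fun Pointee_of :: "'v stmt \<Rightarrow> ('v \<times> 'v) set \<Rightarrow> 'v set" where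
  "Pointee_of (Use x) A = {}"
| "Pointee_of (AddrOf x a) A = {a}"
| "Pointee_of (Copy x y) A = A `` {y}"
| "Pointee_of (Load x y) A = (A O A) `` {y}"
| "Pointee_of (Store x y) A = A `` {y}"
| "Pointee_of Other A = {}"

type_synonym ('n, 'v) dfval =
  "('n \<Rightarrow> 'v set) \<times> ('n \<Rightarrow> 'v set) \<times> ('n \<Rightarrow> ('v \<times> 'v) set) \<times> ('n \<Rightarrow> ('v \<times> 'v) set)"

definition dfF :: "'v set \<Rightarrow> 'v \<Rightarrow> ('n \<Rightarrow> 'n set) \<Rightarrow> ('n \<Rightarrow> 'v stmt) \<Rightarrow> 'n \<Rightarrow> 'n
    \<Rightarrow> ('n, 'v) dfval \<Rightarrow> ('n, 'v) dfval" where
  "dfF P und succ stm startp endp = (\<lambda>(Lin, Lout, Ain, Aout).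
     (\<lambda>n. (Lout n - Kill_of P und (stm n) (Ain n)) \<union> Ref_of P (stm n) (Ain n) (Lout n),
      \<lambda>n. if n = endp then {} else (\<Union>s\<in>succ n. Lin s),
      \<lambda>n. if n = startp then Lin n \<times> {und}
           else restr (\<Union>m\<in>{m. n \<in> succ m}. Aout m) (Lin n),
      \<lambda>n. restr ((Ain n - (Kill_of P und (stm n) (Ain n) \<times> UNIV))
                  \<union> (Def_of P (stm n) (Ain n) \<times> Pointee_of (stm n) (Ain n))) (Lout n)))"

text \<open>The solution: greatest fixed point w.r.t. the data flow order (which is \<supseteq>), i.e. the
  least fixed point w.r.t. componentwise \<subseteq>; this is what iteration from \<emptyset> computes.\<close>
definition df_solution :: "'v set \<Rightarrow> 'v \<Rightarrow> ('n \<Rightarrow> 'n set) \<Rightarrow> ('n \<Rightarrow> 'v stmt) \<Rightarrow> 'n \<Rightarrow> 'n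
    \<Rightarrow> ('n, 'v) dfval" where
  "df_solution P und succ stm startp endp = lfp (dfF P und succ stm startp endp)"

text \<open>Concrete semantics: a memory maps each variable to its content (an address = a variable,
  or und). Dereferencing an undefined pointer blocks. Non-pointer locations never hold
  addresses (stores into them are ignored, loads from them yield und).\<close>
inductive exec_step :: "'v set \<Rightarrow> 'v \<Rightarrow> 'v stmt \<Rightarrow> ('v \<Rightarrow> 'v) \<Rightarrow> ('v \<Rightarrow> 'v) \<Rightarrow> bool"
  for P :: "'v set" and und :: 'v where
  "exec_step P und (Use x) \<sigma> \<sigma>"
| "exec_step P und Other \<sigma> \<sigma>"
| "exec_step P und (AddrOf x a) \<sigma> (\<sigma>(x := a))"
| "exec_step P und (Copy x y) \<sigma> (\<sigma>(x := \<sigma> y))"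
| "\<sigma> y \<noteq> und \<Longrightarrow>
     exec_step P und (Load x y) \<sigma> (\<sigma>(x := (if \<sigma> y \<in> P then \<sigma> (\<sigma> y) else und)))"
| "\<sigma> x \<noteq> und \<Longrightarrow>
     exec_step P und (Store x y) \<sigma> (if \<sigma> x \<in> P then \<sigma>(\<sigma> x := \<sigma> y) else \<sigma>)"

text \<open>reaches n \<sigma>: some execution path from Start reaches node n with memory \<sigma> on entry.\<close>
inductive reaches :: "'v set \<Rightarrow> 'v \<Rightarrow> ('n \<Rightarrow> 'n set) \<Rightarrow> ('n \<Rightarrow> 'v stmt) \<Rightarrow> 'n
    \<Rightarrow> 'n \<Rightarrow> ('v \<Rightarrow> 'v) \<Rightarrow> bool"
  for P und succ stm startp where
  init: "reaches P und succ stm startp startp (\<lambda>_. und)"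
| step: "reaches P und succ stm startp m \<sigma> \<Longrightarrow> n \<in> succ m \<Longrightarrow>
     exec_step P und (stm m) \<sigma> \<sigma>' \<Longrightarrow> reaches P und succ stm startp n \<sigma>'"

definition cfg_edges :: "('n \<Rightarrow> 'n set) \<Rightarrow> ('n \<times> 'n) set" where
  "cfg_edges succ = {(a, b). b \<in> succ a}"

text \<open>Well-formed procedure: all nodes of type 'n are nodes of the CFG.\<close>
definition is_procedure :: "'v set \<Rightarrow> 'v \<Rightarrow> ('n \<Rightarrow> 'n set) \<Rightarrow> ('n \<Rightarrow> 'v stmt) \<Rightarrow> 'n \<Rightarrow> 'n \<Rightarrow> bool" where
  "is_procedure P und succ stm startp endp \<longleftrightarrow>
     und \<notin> P \<and>
     (\<forall>m. startp \<notin> succ m) \<and> succ endp = {} \<and>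
     (\<forall>m. (startp, m) \<in> (cfg_edges succ)\<^sup>*) \<and> (\<forall>m. (m, endp) \<in> (cfg_edges succ)\<^sup>*) \<and>
     (\<forall>m. wf_stmt P (stm m))"

end

theory Submission
  imports Defs
begin

lemma Mset_anti:
  assumes "R \<subseteq> R'" shows "Mset und (R'::('v\<times>'v) set) x \<subseteq> Mset und R x"
proof -
  have rs: "restr R {x} \<subseteq> restr R' {x}" using assms by (auto simp: restr_def)
  show ?thesis
  proof (cases "restr R' {x} = {} \<or> restr R' {x} = {(x, und)}")
    case True
    then have "restr R {x} = {} \<or> restr R {x} = {(x, und)}" using rs by (auto dest: subset_singletonD)
    then show ?thesis by (simp add: Mset_def)
  next
    case F1: False
    show ?thesis
    proof (cases "\<exists>y. y \<noteq> und \<and> restr R' {x} = {(x, y)}")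
      case True
      then obtain y where y: "y \<noteq> und" "restr R' {x} = {(x, y)}" by blast
      then have "restr R {x} = {} \<or> restr R {x} = {(x,y)}" using rs by (auto dest: subset_singletonD)
      then show ?thesis using y F1 by (auto simp: Mset_def)
    next
      case False2: False
      have "Mset und R' x = {}" unfolding Mset_def
        by (subst if_not_P[OF F1], subst if_not_P[OF False2]) (rule refl)
      then show ?thesis by simp
    qed
  qed
qed

lemma Must_anti: "A \<subseteq> A' \<Longrightarrow> Must P und A' \<subseteq> Must P und A"
  unfolding Must_def
  apply (rule UN_mono[OF order_refl])
  apply (rule Sigma_mono[OF order_refl])
  apply (erule Mset_anti)
  done

lemma Kill_anti: "A \<subseteq> A' \<Longrightarrow> Kill_of P und s A' \<subseteq> Kill_of P und s A"
  by (cases s) (use Must_anti[of A A' P und] in auto)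

lemma Def_mono: "A \<subseteq> A' \<Longrightarrow> Def_of P s A \<subseteq> Def_of P s A'"
  by (cases s) auto

lemma Ref_mono: "A \<subseteq> A' \<Longrightarrow> Lo \<subseteq> Lo' \<Longrightarrow> Ref_of P s A Lo \<subseteq> Ref_of P s A' Lo'"
  by (cases s) auto

lemma Pointee_mono: "A \<subseteq> A' \<Longrightarrow> Pointee_of s A \<subseteq> Pointee_of s A'"
  by (cases s) auto

lemma restr_mono: "R \<subseteq> R' \<Longrightarrow> X \<subseteq> X' \<Longrightarrow> restr R X \<subseteq> restr R' X'"
  by (auto simp: restr_def)

lemma dfF_mono: "mono (dfF P und succ stm startp endp)"
proof (rule monoI)
  fix u w :: "('a, 'b) dfval"
  assume le: "u \<le> w"
  obtain a b c d where u: "u = (a,b,c,d)" by (cases u) auto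
  obtain a' b' c' d' where w: "w = (a',b',c',d')" by (cases w) auto
  have ha: "\<And>n. a n \<subseteq> a' n" and hb: "\<And>n. b n \<subseteq> b' n" and hc: "\<And>n. c n \<subseteq> c' n"
    and hd: "\<And>n. d n \<subseteq> d' n"
    using le unfolding u w by (auto simp: less_eq_prod_def le_fun_def)
  have K: "\<And>n. Kill_of P und (stm n) (c' n) \<subseteq> Kill_of P und (stm n) (c n)"
    by (rule Kill_anti[OF hc])
  have 1: "\<And>n. (b n - Kill_of P und (stm n) (c n)) \<union> Ref_of P (stm n) (c n) (b n)
      \<subseteq> (b' n - Kill_of P und (stm n) (c' n)) \<union> Ref_of P (stm n) (c' n) (b' n)"
  proof -
    fix n
    have "Ref_of P (stm n) (c n) (b n) \<subseteq> Ref_of P (stm n) (c' n) (b' n)" by (rule Ref_mono[OF hc hb])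
    then show "?thesis n" using K[of n] hb[of n] by blast
  qed
  have 2: "\<And>n. (if n = endp then {} else (\<Union>s\<in>succ n. a s)) \<subseteq>
       (if n = endp then {} else (\<Union>s\<in>succ n. a' s))" using ha by auto
  have 3: "\<And>n. (if n = startp then a n \<times> {und}
           else restr (\<Union>m\<in>{m. n \<in> succ m}. d m) (a n)) \<subseteq> (if n = startp then a' n \<times> {und}
           else restr (\<Union>m\<in>{m. n \<in> succ m}. d' m) (a' n))"
    using ha hd by (auto simp: restr_def; blast)
  have 4: "\<And>n. restr ((c n - (Kill_of P und (stm n) (c n) \<times> UNIV))
                  \<union> (Def_of P (stm n) (c n) \<times> Pointee_of (stm n) (c n))) (b n) \<subseteq>
        restr ((c' n - (Kill_of P und (stm n) (c' n) \<times> UNIV))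
                  \<union> (Def_of P (stm n) (c' n) \<times> Pointee_of (stm n) (c' n))) (b' n)"
  proof -
    fix n
    have "c n - (Kill_of P und (stm n) (c n) \<times> UNIV) \<subseteq> c' n - (Kill_of P und (stm n) (c' n) \<times> UNIV)"
      using K[of n] hc[of n] by blast
    moreover have "Def_of P (stm n) (c n) \<times> Pointee_of (stm n) (c n) \<subseteq> Def_of P (stm n) (c' n) \<times> Pointee_of (stm n) (c' n)"
      using Def_mono[OF hc[of n]] Pointee_mono[OF hc[of n]] by blast
    ultimately show "?thesis n" by (intro restr_mono hb) blast
  qed
  show "dfF P und succ stm startp endp u \<le> dfF P und succ stm startp endp w"
    unfolding u w dfF_def using 1 2 3 4 by (simp add: less_eq_prod_def le_fun_def)
qed

lemma Kill_store: "(x, a) \<in> A \<Longrightarrow> a \<noteq> und \<Longrightarrow> Kill_of P und (Store x y) A \<subseteq> {a}"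
proof -
  assume xa: "(x, a) \<in> A" and au: "a \<noteq> und"
  have r: "(x, a) \<in> restr A {x}" using xa by (simp add: restr_def)
  have c1: "\<not> (restr A {x} = {} \<or> restr A {x} = {(x, und)})" using r au by blast
  have "Mset und A x \<subseteq> {a}"
  proof (cases "\<exists>y. y \<noteq> und \<and> restr A {x} = {(x, y)}")
    case True
    then obtain y where y: "y \<noteq> und" "restr A {x} = {(x, y)}" by blast
    have ay: "a = y" using r y by blast
    have th: "(THE y'. restr A {x} = {(x, y')}) = y" by (rule the_equality) (use y(2) in auto)
    have "Mset und A x = {THE y. restr A {x} = {(x, y)}}" unfolding Mset_def
      by (subst if_not_P[OF c1], subst if_P[OF True]) (rule refl)
    then show ?thesis using th ay by simp
  next
    case False
    have "Mset und A x = {}" unfolding Mset_def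
      by (subst if_not_P[OF c1], subst if_not_P[OF False]) (rule refl)
    then show ?thesis by simp
  qed
  then show ?thesis by (auto simp: Must_def)
qed

lemma inv:
  assumes reach: "reaches P und succ stm startp n \<sigma>"
    and nostart: "\<forall>m. startp \<notin> succ m" and endsucc: "succ endp = {}"
    and L: "\<forall>n. Lin n = (Lout n - Kill_of P und (stm n) (Ain n)) \<union> Ref_of P (stm n) (Ain n) (Lout n)"
    and LO: "\<forall>n. Lout n = (if n = endp then {} else (\<Union>s\<in>succ n. Lin s))"
    and AI: "\<forall>n. Ain n = (if n = startp then Lin n \<times> {und}
           else restr (\<Union>m\<in>{m. n \<in> succ m}. Aout m) (Lin n))"
    and AO: "\<forall>n. Aout n = restr ((Ain n - (Kill_of P und (stm n) (Ain n) \<times> UNIV))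
                  \<union> (Def_of P (stm n) (Ain n) \<times> Pointee_of (stm n) (Ain n))) (Lout n)"
  shows "\<forall>v\<in>Lin n. \<sigma> v \<noteq> und \<longrightarrow> (v, \<sigma> v) \<in> Ain n"
  using reach
proof induction
  case init
  then show ?case by simp
next
  case (step m \<sigma> n \<sigma>')
  have IH: "\<And>v. v \<in> Lin m \<Longrightarrow> \<sigma> v \<noteq> und \<Longrightarrow> (v, \<sigma> v) \<in> Ain m" using step.IH by blast
  have mE: "m \<noteq> endp" using step.hyps(2) endsucc by auto
  have nS: "n \<noteq> startp" using nostart step.hyps(2) by auto
  let ?A = "Ain m" and ?K = "Kill_of P und (stm m) (Ain m)"
    and ?D = "Def_of P (stm m) (Ain m)" and ?Pt = "Pointee_of (stm m) (Ain m)"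
    and ?R = "Ref_of P (stm m) (Ain m) (Lout m)"
  have Lm: "Lin m = (Lout m - ?K) \<union> ?R" using L by blast
  have Am: "Aout m = restr ((?A - ?K \<times> UNIV) \<union> ?D \<times> ?Pt) (Lout m)" using AO by blast
  have frame: "(v, \<sigma>' v) \<in> (?A - ?K \<times> UNIV) \<union> ?D \<times> ?Pt"
    if vL: "v \<in> Lout m" and vu: "\<sigma>' v \<noteq> und" and vK: "v \<notin> ?K" and vs: "\<sigma>' v = \<sigma> v" for v
  proof -
    have "v \<in> Lin m" using Lm vL vK by blast
    then have "(v, \<sigma> v) \<in> ?A" using IH vu vs by simp
    then show ?thesis using vK vs by simp
  qed
  have key: "(v, \<sigma>' v) \<in> (?A - ?K \<times> UNIV) \<union> ?D \<times> ?Pt"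
    if vL: "v \<in> Lout m" and vu: "\<sigma>' v \<noteq> und" for v
    using step.hyps(3)
  proof cases
    case (1 x)
    have "?K = {}" using 1 by simp
    then show ?thesis using frame[OF vL vu] 1 by simp
  next
    case 2
    have "?K = {}" using 2 by simp
    then show ?thesis using frame[OF vL vu] 2 by simp
  next
    case (3 x a)
    have K: "?K = {x}" and D: "?D = {x}" and Pt: "?Pt = {a}" using 3 by simp_all
    show ?thesis
    proof (cases "v = x")
      case True
      then have "\<sigma>' v = a" using 3 by simp
      then show ?thesis using D Pt True by simp
    next
      case False
      then have "\<sigma>' v = \<sigma> v" using 3 by simp
      then show ?thesis using frame[OF vL vu] K False by simp
    qed
  next
    case (4 x y)
    have K: "?K = {x}" and D: "?D = {x}" and Pt: "?Pt = ?A `` {y}" using 4 by simp_all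
    show ?thesis
    proof (cases "v = x")
      case True
      have "?D \<inter> Lout m \<noteq> {}" using D True vL by blast
      then have "?R = {y}" using 4 by simp
      then have yL: "y \<in> Lin m" using Lm by blast
      have sv: "\<sigma>' v = \<sigma> y" using 4 True by simp
      then have "(y, \<sigma> y) \<in> ?A" using IH[OF yL] vu by simp
      then have "\<sigma> y \<in> ?Pt" using Pt by simp
      then show ?thesis using D True sv by simp
    next
      case False
      then have "\<sigma>' v = \<sigma> v" using 4 by simp
      then show ?thesis using frame[OF vL vu] K False by simp
    qed
  next
    case (5 y x)
    have K: "?K = {x}" and D: "?D = {x}" and Pt: "?Pt = (?A O ?A) `` {y}" using 5 by simp_all
    show ?thesis
    proof (cases "v = x")
      case True
      have sv0: "\<sigma>' v = (if \<sigma> y \<in> P then \<sigma> (\<sigma> y) else und)" using 5 True by simp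
      then have yP: "\<sigma> y \<in> P" using vu by (cases "\<sigma> y \<in> P") simp_all
      then have sv: "\<sigma>' v = \<sigma> (\<sigma> y)" using sv0 by simp
      have "?D \<inter> Lout m \<noteq> {}" using D True vL by blast
      then have R: "?R = {y} \<union> ((?A `` {y}) \<inter> P)" using 5 by simp
      then have yL: "y \<in> Lin m" using Lm by blast
      have y1: "(y, \<sigma> y) \<in> ?A" using IH[OF yL] 5 by simp
      have "\<sigma> y \<in> Lin m" using Lm R y1 yP by blast
      then have y2: "(\<sigma> y, \<sigma> (\<sigma> y)) \<in> ?A" using IH sv vu by simp
      have "\<sigma> (\<sigma> y) \<in> (?A O ?A) `` {y}" using y1 y2 by blast
      then show ?thesis using D Pt True sv by simp
    next
      case False
      then have "\<sigma>' v = \<sigma> v" using 5 by simp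
      then show ?thesis using frame[OF vL vu] K False by simp
    qed
  next
    case (6 x y)
    have D: "?D = (?A `` {x}) \<inter> P" and Pt: "?Pt = ?A `` {y}" using 6 by simp_all
    have "x \<in> ?R" using 6 by simp
    then have xL: "x \<in> Lin m" using Lm by blast
    have x1: "(x, \<sigma> x) \<in> ?A" using IH[OF xL] 6 by simp
    have Ks: "?K \<subseteq> {\<sigma> x}" using Kill_store[OF x1] 6 by simp
    show ?thesis
    proof (cases "\<sigma> x \<in> P \<and> v = \<sigma> x")
      case True
      then have d: "v \<in> ?D" using x1 D by blast
      then have "?D \<inter> Lout m \<noteq> {}" using vL by blast
      then have "?R = {x, y}" using 6 by simp
      then have yL: "y \<in> Lin m" using Lm by blast
      have sv: "\<sigma>' v = \<sigma> y" using True 6 by simp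
      then have "(y, \<sigma> y) \<in> ?A" using IH[OF yL] vu by simp
      then have "\<sigma> y \<in> ?Pt" using Pt by simp
      then show ?thesis using d sv by simp
    next
      case False
      then have "\<sigma>' v = \<sigma> v" using 6 by (cases "\<sigma> x \<in> P") simp_all
      moreover have "v \<notin> ?K"
      proof
        assume vk: "v \<in> ?K"
        have "?K \<subseteq> P" using 6 by simp
        then have "v \<in> P" using vk by (rule subsetD)
        moreover have "v \<in> {\<sigma> x}" using Ks vk by (rule subsetD)
        then have "v = \<sigma> x" by simp
        ultimately show False using False by simp
      qed
      ultimately show ?thesis using frame[OF vL vu] by simp
    qed
  qed
  show ?case
  proof (intro ballI impI)
    fix v assume vL: "v \<in> Lin n" and vu: "\<sigma>' v \<noteq> und"
    have "v \<in> Lout m" using LO mE vL step.hyps(2) by auto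
    then have "(v, \<sigma>' v) \<in> Aout m" using key vu Am by (auto simp: restr_def)
    then show "(v, \<sigma>' v) \<in> Ain n" using AI nS vL step.hyps(2) by (auto simp: restr_def)
  qed
qed

theorem theorem3:
  fixes P :: "'v::finite set" and und :: 'v
    and succ :: "'n::finite \<Rightarrow> 'n set" and stm :: "'n \<Rightarrow> 'v stmt"
    and startp endp n :: 'n and x z :: 'v and \<sigma> :: "'v \<Rightarrow> 'v"
  assumes "is_procedure P und succ stm startp endp"
    and "(Lin, Lout, Ain, Aout) = df_solution P und succ stm startp endp"
    and "x \<in> P" and "z \<noteq> und"
    and "reaches P und succ stm startp n \<sigma>" and "\<sigma> x = z"
    and "x \<in> Ref_of P (stm n) (Ain n) (Lout n)"
  shows "(x, z) \<in> Ain n"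
proof -
  have fp0: "df_solution P und succ stm startp endp =
     dfF P und succ stm startp endp (df_solution P und succ stm startp endp)"
    unfolding df_solution_def by (rule lfp_unfold[OF dfF_mono])
  have fp: "(Lin, Lout, Ain, Aout) = dfF P und succ stm startp endp (Lin, Lout, Ain, Aout)"
    using fp0 by (simp only: assms(2)[symmetric])
  then have eqs: "Lin = (\<lambda>n. (Lout n - Kill_of P und (stm n) (Ain n)) \<union> Ref_of P (stm n) (Ain n) (Lout n))"
     "Lout = (\<lambda>n. if n = endp then {} else (\<Union>s\<in>succ n. Lin s))"
     "Ain = (\<lambda>n. if n = startp then Lin n \<times> {und}
           else restr (\<Union>m\<in>{m. n \<in> succ m}. Aout m) (Lin n))"
     "Aout = (\<lambda>n. restr ((Ain n - (Kill_of P und (stm n) (Ain n) \<times> UNIV))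
                  \<union> (Def_of P (stm n) (Ain n) \<times> Pointee_of (stm n) (Ain n))) (Lout n))"
    unfolding dfF_def by simp_all
  have pr: "\<forall>m. startp \<notin> succ m" "succ endp = {}"
    using assms(1) by (auto simp: is_procedure_def)
  have I: "\<forall>v\<in>Lin n. \<sigma> v \<noteq> und \<longrightarrow> (v, \<sigma> v) \<in> Ain n"
  proof (rule inv[OF assms(5) pr])
    show "\<forall>n. Lin n = (Lout n - Kill_of P und (stm n) (Ain n)) \<union> Ref_of P (stm n) (Ain n) (Lout n)"
      using eqs(1) by simp
    show "\<forall>n. Lout n = (if n = endp then {} else (\<Union>s\<in>succ n. Lin s))"
      using eqs(2) by simp
    show "\<forall>n. Ain n = (if n = startp then Lin n \<times> {und}
           else restr (\<Union>m\<in>{m. n \<in> succ m}. Aout m) (Lin n))"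
      using eqs(3) by simp
    show "\<forall>n. Aout n = restr ((Ain n - (Kill_of P und (stm n) (Ain n) \<times> UNIV))
                  \<union> (Def_of P (stm n) (Ain n) \<times> Pointee_of (stm n) (Ain n))) (Lout n)"
      using eqs(4) by simp
  qed
  have "x \<in> Lin n" using assms(7) by (subst eqs(1)) simp
  then show ?thesis using I assms(4,6) by auto
qed

end
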